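(* Assume $r(y,x_0)\in[-D,D]$, $\lambda>0$, and that there is $L>0$ such that for every intermediate state $x_s$ visited and every $x_0$, $l(x_0)=p_{\mathrm{ref}}(x_0\mid y,x_s)/p_{\mathrm{small}}(x_0\mid y,x_s)\le L$ (with $p_{\mathrm{small}}$ positive wherever $p_{\mathrm{ref}}$ is). Let $q(x_0\mid y)$ be the law of the output of Algorithm 2 with $M$ candidates, $K$ proposal samples per energy estimate, and $I$ guidance steps. For $\epsilon>0$ define $$g(\epsilon,M,K,L,\lambda,D)=\frac{e^{D/\lambda}-e^{-D/\lambda}}{2}\sqrt{\frac{4K\epsilon^2}{ML^2e^{2D/\lambda}}},$$ and suppose $C-\epsilon-g(\epsilon,M,K,L,\lambda,D)>0$. Then $$\mathsf{TV}\big(q(x_0\mid y)\,\|\,p(x_0\mid y)\big)\le I\left(\frac{2\epsilon+g(\epsilon,M,K,L,\lambda,D)}{C-\epsilon-g(\epsilon,M,K,L,\lambda,D)}\right)+4I\exp\!\left(-\frac{2K\epsilon^2}{L^2e^{2D/\lambda}}\right).$$ In particular, choosing $\epsilon=\tilde{\mathcal O}(1/\sqrt K)$ gives $g=\tilde{\mathcal O}(1/\sqrt M)$ and $\mathsf{TV}(q\|p)=\tilde{\mathcal O}(I/\sqrt M+I/\sqrt K)$.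
   Context: Setting: MLM framework with backward generation $x_T\to\cdots\to x_0$, $x_T$ the fixed fully masked sequence; reference model $p_{\mathrm{ref}}$, proposal model $p_{\mathrm{small}}$, query $y$. Target $p(x_0\mid y)=p_{\mathrm{ref}}(x_0\mid y)\exp(r(y,x_0)/\lambda)/C$ with $C=\sum_{x_0}p_{\mathrm{ref}}(x_0\mid y)\exp(r(y,x_0)/\lambda)$. Energy $\mathcal E(y,x_s)=\mathbb E_{p_{\mathrm{ref}}(x_0\mid y,x_s)}[\exp(r(y,x_0)/\lambda)]$ and its importance-sampling estimate $\widehat{\mathcal E}_{\mathrm{small}}(y,x_s)=\frac1K\sum_{k=1}^K\frac{p_{\mathrm{ref}}(x_0(k)\mid y,x_s)}{p_{\mathrm{small}}(x_0(k)\mid y,x_s)}\exp(r(y,x_0(k))/\lambda)$ with $x_0(k)$ i.i.d. from $p_{\mathrm{small}}(\cdot\mid y,x_s)$. Algorithm 2 (ETS-IS): timesteps $t_i=iT/I$; start at $x_{t_I}=x_T$; for $i=I,\dots,1$: draw $M$ candidates i.i.d. from $p_{\mathrm{ref}}(x_{t_{i-1}}\mid y,x_{t_i})$, compute $\widehat{\mathcal E}_{\mathrm{small}}$ for each, select candidate $m$ with probability proportional to its estimate, and set $x_{t_{i-1}}$ to it; output $x_0$. $\mathsf{TV}(p\|q)=\frac12\sum_x|p(x)-q(x)|$. *)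

theory Defs
  imports "HOL-Probability.Probability"
begin

text \<open>States (partially masked sequences) form a finite type 'x;
queries have type 'y. Time levels are indexed by i = 0..I, level i standing for
time t_i = i*T/I; level I is the fully masked sequence xT.
step y i x : the reference one-step backward kernel p_ref(x_{t_(i-1)} | y, x_{t_i} = x).\<close>

fun iid_pmf :: "nat \<Rightarrow> 'a pmf \<Rightarrow> 'a list pmf" where
  "iid_pmf 0 p = return_pmf []"
| "iid_pmf (Suc n) p = do { a \<leftarrow> p; as \<leftarrow> iid_pmf n p; return_pmf (a # as) }"

fun ref_down :: "(nat \<Rightarrow> 'x \<Rightarrow> 'x pmf) \<Rightarrow> nat \<Rightarrow> nat \<Rightarrow> 'x \<Rightarrow> 'x pmf" where
  "ref_down step 0 j x = return_pmf x"
| "ref_down step (Suc n) j x = bind_pmf (step (j + Suc n) x) (\<lambda>x'. ref_down step n j x')"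

definition ref_post :: "('y \<Rightarrow> nat \<Rightarrow> 'x \<Rightarrow> 'x pmf) \<Rightarrow> 'y \<Rightarrow> nat \<Rightarrow> 'x \<Rightarrow> 'x pmf" where
  "ref_post step y j x = ref_down (step y) j 0 x"

text \<open>Law of the reference chain at level j, started from xT at level I
(its support = the intermediate states that can be visited at level j).\<close>
definition ref_marg :: "('y \<Rightarrow> nat \<Rightarrow> 'x \<Rightarrow> 'x pmf) \<Rightarrow> 'y \<Rightarrow> nat \<Rightarrow> 'x \<Rightarrow> nat \<Rightarrow> 'x pmf" where
  "ref_marg step y I xT j = ref_down (step y) (I - j) j xT"

definition norm_const :: "('y \<Rightarrow> nat \<Rightarrow> 'x::finite \<Rightarrow> 'x pmf) \<Rightarrow> ('y \<Rightarrow> 'x \<Rightarrow> real) \<Rightarrow> real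
    \<Rightarrow> 'y \<Rightarrow> nat \<Rightarrow> 'x \<Rightarrow> real" where
  "norm_const step r lam y I xT =
     (\<Sum>x0\<in>UNIV. pmf (ref_post step y I xT) x0 * exp (r y x0 / lam))"

definition target :: "('y \<Rightarrow> nat \<Rightarrow> 'x::finite \<Rightarrow> 'x pmf) \<Rightarrow> ('y \<Rightarrow> 'x \<Rightarrow> real) \<Rightarrow> real
    \<Rightarrow> 'y \<Rightarrow> nat \<Rightarrow> 'x \<Rightarrow> 'x \<Rightarrow> real" where
  "target step r lam y I xT x0 =
     pmf (ref_post step y I xT) x0 * exp (r y x0 / lam) / norm_const step r lam y I xT"

definition energy_hat ::
  "('y \<Rightarrow> nat \<Rightarrow> 'x \<Rightarrow> 'x pmf) \<Rightarrow> ('y \<Rightarrow> nat \<Rightarrow> 'x \<Rightarrow> 'x pmf) \<Rightarrow> ('y \<Rightarrow> 'x \<Rightarrow> real) \<Rightarrow> real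
    \<Rightarrow> 'y \<Rightarrow> nat \<Rightarrow> 'x \<Rightarrow> 'x list \<Rightarrow> real" where
  "energy_hat step small r lam y j xs samples =
     (\<Sum>x0\<leftarrow>samples. pmf (ref_post step y j xs) x0 / pmf (small y j xs) x0 * exp (r y x0 / lam))
       / real (length samples)"

definition energy_est ::
  "('y \<Rightarrow> nat \<Rightarrow> 'x \<Rightarrow> 'x pmf) \<Rightarrow> ('y \<Rightarrow> nat \<Rightarrow> 'x \<Rightarrow> 'x pmf) \<Rightarrow> ('y \<Rightarrow> 'x \<Rightarrow> real) \<Rightarrow> real
    \<Rightarrow> nat \<Rightarrow> 'y \<Rightarrow> nat \<Rightarrow> 'x \<Rightarrow> real pmf" where
  "energy_est step small r lam K y j xs =
     map_pmf (energy_hat step small r lam y j xs) (iid_pmf K (small y j xs))"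

text \<open>Selection of an index m < M with probability proportional to the nonnegative
weights w_m (convention: uniformly if all weights vanish).\<close>
definition select_index :: "real list \<Rightarrow> nat pmf" where
  "select_index ws =
     (let S = sum_list ws; M = length ws in
      if S = 0 then pmf_of_list (map (\<lambda>m. (m, 1 / real M)) [0..<M])
      else pmf_of_list (map (\<lambda>m. (m, ws ! m / S)) [0..<M]))"

definition ets_step ::
  "('y \<Rightarrow> nat \<Rightarrow> 'x \<Rightarrow> 'x pmf) \<Rightarrow> ('y \<Rightarrow> nat \<Rightarrow> 'x \<Rightarrow> 'x pmf) \<Rightarrow> ('y \<Rightarrow> 'x \<Rightarrow> real) \<Rightarrow> real
    \<Rightarrow> nat \<Rightarrow> nat \<Rightarrow> 'y \<Rightarrow> nat \<Rightarrow> 'x \<Rightarrow> 'x pmf" where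
  "ets_step step small r lam M K y i x =
     do { ces \<leftarrow> iid_pmf M (do { c \<leftarrow> step y i x;
                                  e \<leftarrow> energy_est step small r lam K y (i - 1) c;
                                  return_pmf (c, e) });
          m \<leftarrow> select_index (map snd ces);
          return_pmf (fst (ces ! m)) }"

fun ets_run ::
  "('y \<Rightarrow> nat \<Rightarrow> 'x \<Rightarrow> 'x pmf) \<Rightarrow> ('y \<Rightarrow> nat \<Rightarrow> 'x \<Rightarrow> 'x pmf) \<Rightarrow> ('y \<Rightarrow> 'x \<Rightarrow> real) \<Rightarrow> real
    \<Rightarrow> nat \<Rightarrow> nat \<Rightarrow> 'y \<Rightarrow> nat \<Rightarrow> 'x \<Rightarrow> 'x pmf" where
  "ets_run step small r lam M K y 0 x = return_pmf x"
| "ets_run step small r lam M K y (Suc i) x =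
     bind_pmf (ets_step step small r lam M K y (Suc i) x) (ets_run step small r lam M K y i)"

definition ets_output ::
  "('y \<Rightarrow> nat \<Rightarrow> 'x \<Rightarrow> 'x pmf) \<Rightarrow> ('y \<Rightarrow> nat \<Rightarrow> 'x \<Rightarrow> 'x pmf) \<Rightarrow> ('y \<Rightarrow> 'x \<Rightarrow> real) \<Rightarrow> real
    \<Rightarrow> nat \<Rightarrow> nat \<Rightarrow> nat \<Rightarrow> 'y \<Rightarrow> 'x \<Rightarrow> 'x pmf" where
  "ets_output step small r lam M K I y xT = ets_run step small r lam M K y I xT"

definition TV :: "('x::finite \<Rightarrow> real) \<Rightarrow> ('x \<Rightarrow> real) \<Rightarrow> real" where
  "TV p q = (1/2) * (\<Sum>x\<in>UNIV. \<bar>p x - q x\<bar>)"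

definition g_fun :: "real \<Rightarrow> nat \<Rightarrow> nat \<Rightarrow> real \<Rightarrow> real \<Rightarrow> real \<Rightarrow> real" where
  "g_fun \<epsilon> M K L lam D =
     (exp (D / lam) - exp (- D / lam)) / 2
       * sqrt (4 * real K * \<epsilon>^2 / (real M * L^2 * exp (2 * D / lam)))"

end

theory Submission
  imports Defs
begin


abbreviation EE :: "'a pmf \<Rightarrow> ('a \<Rightarrow> real) \<Rightarrow> real" where
  "EE p f \<equiv> measure_pmf.expectation p f"

lemma E_bind:
  assumes "finite (set_pmf p)" "\<And>a. a \<in> set_pmf p \<Longrightarrow> finite (set_pmf (f a))"
  shows "EE (bind_pmf p f) h = EE p (\<lambda>a. EE (f a) h)"
proof -
  have "EE (bind_pmf p f) h = (\<Sum>a\<in>set_pmf p. pmf p a *\<^sub>R EE (f a) h)"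
    by (rule pmf_expectation_bind) (use assms in auto)
  also have "\<dots> = EE p (\<lambda>a. EE (f a) h)"
    by (rule integral_measure_pmf[symmetric]) (use assms in auto)
  finally show ?thesis .
qed

lemma E_add:
  assumes "finite (set_pmf p)"
  shows "EE p (\<lambda>x. f x + g x) = EE p f + EE p g"
  by (rule Bochner_Integration.integral_add) (auto simp: integrable_measure_pmf_finite assms)

lemma E_diff:
  assumes "finite (set_pmf p)"
  shows "EE p (\<lambda>x. f x - g x) = EE p f - EE p g"
  by (rule Bochner_Integration.integral_diff) (auto simp: integrable_measure_pmf_finite assms)

lemma finite_iid: "finite (set_pmf p) \<Longrightarrow> finite (set_pmf (iid_pmf n p))"
  by (induction n) auto

lemma set_iid: "as \<in> set_pmf (iid_pmf n p) \<Longrightarrow> length as = n \<and> set as \<subseteq> set_pmf p"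
  by (induction n arbitrary: as) fastforce+

lemma E_iid_Suc:
  assumes "finite (set_pmf p)"
  shows "EE (iid_pmf (Suc n) p) h = EE p (\<lambda>a. EE (iid_pmf n p) (\<lambda>as. h (a # as)))"
  using assms finite_iid[OF assms, of n]
  by (simp add: E_bind)

lemma E_iid_sum:
  assumes "finite (set_pmf p)"
  shows "EE (iid_pmf n p) (\<lambda>as. sum_list (map f as)) = real n * EE p f"
proof (induction n)
  case 0 then show ?case by simp
next
  case (Suc n)
  have "EE (iid_pmf (Suc n) p) (\<lambda>as. sum_list (map f as))
      = EE p (\<lambda>a. EE (iid_pmf n p) (\<lambda>as. f a + sum_list (map f as)))"
    by (subst E_iid_Suc[OF assms]) simp
  also have "\<dots> = EE p (\<lambda>a. f a + real n * EE p f)"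
  proof -
    have "\<And>a. EE (iid_pmf n p) (\<lambda>as. f a + sum_list (map f as)) = f a + real n * EE p f"
      by (simp add: E_add finite_iid assms Suc)
    then show ?thesis by simp
  qed
  also have "\<dots> = EE p f + real n * EE p f"
    by (simp add: E_add assms)
  finally show ?case by (simp add: algebra_simps)
qed

lemma E_iid_sq:
  assumes "finite (set_pmf p)" "EE p f = 0"
  shows "EE (iid_pmf n p) (\<lambda>as. (sum_list (map f as))\<^sup>2) = real n * EE p (\<lambda>a. (f a)\<^sup>2)"
proof (induction n)
  case 0 then show ?case by simp
next
  case (Suc n)
  have fi: "finite (set_pmf (iid_pmf n p))" by (rule finite_iid[OF assms(1)])
  have z: "EE (iid_pmf n p) (\<lambda>as. sum_list (map f as)) = 0"
    using E_iid_sum[OF assms(1)] assms(2) by simp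
  have "EE (iid_pmf (Suc n) p) (\<lambda>as. (sum_list (map f as))\<^sup>2)
      = EE p (\<lambda>a. EE (iid_pmf n p) (\<lambda>as. (f a)\<^sup>2 + 2 * f a * sum_list (map f as) + (sum_list (map f as))\<^sup>2))"
    by (subst E_iid_Suc[OF assms(1)]) (simp add: power2_sum add_ac)
  also have "\<dots> = EE p (\<lambda>a. (f a)\<^sup>2 + 2 * f a * EE (iid_pmf n p) (\<lambda>as. sum_list (map f as)) + real n * EE p (\<lambda>a. (f a)\<^sup>2))"
  proof -
    have "\<And>a. EE (iid_pmf n p) (\<lambda>as. (f a)\<^sup>2 + 2 * f a * sum_list (map f as) + (sum_list (map f as))\<^sup>2)
       = (f a)\<^sup>2 + 2 * f a * EE (iid_pmf n p) (\<lambda>as. sum_list (map f as)) + real n * EE p (\<lambda>a. (f a)\<^sup>2)"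
      by (simp add: integral_add integrable_measure_pmf_finite fi Suc[symmetric])
    then show ?thesis by simp
  qed
  also have "\<dots> = EE p (\<lambda>a. (f a)\<^sup>2 + real n * EE p (\<lambda>a. (f a)\<^sup>2))"
    by (simp add: z)
  also have "\<dots> = EE p (\<lambda>a. (f a)\<^sup>2) + real n * EE p (\<lambda>a. (f a)\<^sup>2)"
    by (simp add: E_add assms)
  finally show ?case by (simp add: algebra_simps)
qed

lemma E_abs_sqrt:
  assumes "finite (set_pmf p)"
  shows "EE p (\<lambda>a. \<bar>f a\<bar>) \<le> sqrt (EE p (\<lambda>a. (f a)\<^sup>2))"
proof -
  have "0 \<le> measure_pmf.variance p (\<lambda>a. \<bar>f a\<bar>)" by (rule measure_pmf.variance_positive)
  also have "measure_pmf.variance p (\<lambda>a. \<bar>f a\<bar>) = EE p (\<lambda>a. (f a)\<^sup>2) - (EE p (\<lambda>a. \<bar>f a\<bar>))\<^sup>2"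
    by (subst measure_pmf.variance_eq) (auto simp: integrable_measure_pmf_finite assms)
  finally have "(EE p (\<lambda>a. \<bar>f a\<bar>))\<^sup>2 \<le> EE p (\<lambda>a. (f a)\<^sup>2)" by simp
  then show ?thesis using real_le_rsqrt by blast
qed

lemma E_mono:
  assumes "finite (set_pmf p)" "\<And>x. x \<in> set_pmf p \<Longrightarrow> f x \<le> g x"
  shows "EE p f \<le> EE p g"
  by (rule integral_mono_AE) (auto simp: integrable_measure_pmf_finite assms AE_measure_pmf_iff)

lemma E_cong:
  assumes "\<And>x. x \<in> set_pmf p \<Longrightarrow> f x = g x"
  shows "EE p f = EE p g"
  by (rule integral_cong_AE) (auto simp: assms AE_measure_pmf_iff)

lemma var_interval:
  assumes fin: "finite (set_pmf p)" and b: "\<And>x. x \<in> set_pmf p \<Longrightarrow> lo \<le> f x \<and> f x \<le> hi"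
  shows "EE p (\<lambda>x. (f x - EE p f)\<^sup>2) \<le> (hi - lo)\<^sup>2 / 4"
proof -
  define m where "m = EE p f"
  have "EE p (\<lambda>x. (f x - m)\<^sup>2) \<le> EE p (\<lambda>x. (hi + lo - 2 * m) * f x + (m\<^sup>2 - hi * lo))"
  proof (rule E_mono[OF fin])
    fix x assume "x \<in> set_pmf p"
    then have "0 \<le> (hi - f x) * (f x - lo)" using b by auto
    then show "(f x - m)\<^sup>2 \<le> (hi + lo - 2 * m) * f x + (m\<^sup>2 - hi * lo)"
      by (simp add: power2_eq_square algebra_simps)
  qed
  also have "\<dots> = (hi + lo - 2 * m) * m + (m\<^sup>2 - hi * lo)"
    by (simp add: E_add fin m_def)
  also have "\<dots> \<le> (hi - lo)\<^sup>2 / 4"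
  proof -
    have "0 \<le> ((hi + lo) / 2 - m)\<^sup>2" by simp
    moreover have "(hi - lo)\<^sup>2 / 4 - ((hi + lo - 2 * m) * m + (m\<^sup>2 - hi * lo)) = ((hi + lo) / 2 - m)\<^sup>2"
      by (simp add: power2_eq_square field_simps)
    ultimately show ?thesis by linarith
  qed
  finally show ?thesis by (simp add: m_def)
qed

lemma E_J:
  fixes P :: "'x::finite pmf"
  assumes "\<And>c. finite (set_pmf (est c))"
  shows "EE (bind_pmf P (\<lambda>c. bind_pmf (est c) (\<lambda>e. return_pmf (c, e)))) g
       = EE P (\<lambda>c. EE (est c) (\<lambda>e. g (c, e)))"
  by (simp add: E_bind assms)

lemma finite_J:
  fixes P :: "'x::finite pmf"
  assumes "\<And>c. finite (set_pmf (est c))"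
  shows "finite (set_pmf (bind_pmf P (\<lambda>c. bind_pmf (est c) (\<lambda>e. return_pmf (c, e)))))"
  by (simp add: assms)

lemma sqrt_avg: "M \<ge> (1::nat) \<Longrightarrow> sqrt (real M * V) / real M = sqrt (V / real M)"
proof -
  assume M: "M \<ge> 1"
  have "sqrt (V / real M) = sqrt (real M * V / (real M)\<^sup>2)"
    using M by (simp add: power2_eq_square)
  also have "\<dots> = sqrt (real M * V) / real M"
    by (simp add: real_sqrt_divide)
  finally show ?thesis by simp
qed

lemma conc:
  fixes P :: "'x::finite pmf" and est :: "'x \<Rightarrow> real pmf" and w :: "'x \<Rightarrow> real"
  assumes fin: "\<And>c. finite (set_pmf (est c))"
    and mean: "\<And>c. c \<in> set_pmf P \<Longrightarrow> EE (est c) (\<lambda>e. e) = w c"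
    and var: "\<And>c. c \<in> set_pmf P \<Longrightarrow> EE (est c) (\<lambda>e. (e - w c)\<^sup>2) \<le> V"
    and bnd: "\<And>c. c \<in> set_pmf P \<Longrightarrow> lo \<le> w c \<and> w c \<le> hi"
    and M: "M \<ge> 1"
  shows "EE (iid_pmf M (bind_pmf P (\<lambda>c. bind_pmf (est c) (\<lambda>e. return_pmf (c, e)))))
            (\<lambda>ces. \<bar>sum_list (map snd ces) / real M - EE P w\<bar>)
         \<le> sqrt (V / real M) + (hi - lo) / (2 * sqrt (real M))"
proof -
  define J where "J = bind_pmf P (\<lambda>c. bind_pmf (est c) (\<lambda>e. return_pmf (c, e)))"
  define Ew where "Ew = EE P w"
  define f1 where "f1 = (\<lambda>z::'x \<times> real. snd z - w (fst z))"
  define f2 where "f2 = (\<lambda>z::'x \<times> real. w (fst z) - Ew)"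
  have finJ: "finite (set_pmf J)" unfolding J_def by (rule finite_J[OF fin])
  have finI: "finite (set_pmf (iid_pmf M J))" by (rule finite_iid[OF finJ])
  have finP: "finite (set_pmf P)" by simp
  have EJ: "EE J g = EE P (\<lambda>c. EE (est c) (\<lambda>e. g (c, e)))" for g
    unfolding J_def by (rule E_J[OF fin])
  have Ef1: "EE J f1 = 0"
  proof -
    have "EE J f1 = EE P (\<lambda>c. EE (est c) (\<lambda>e. e - w c))" by (simp add: EJ f1_def)
    also have "\<dots> = EE P (\<lambda>c. 0)"
      by (rule E_cong) (simp add: E_diff fin mean)
    finally show ?thesis by simp
  qed
  have Ef1sq: "EE J (\<lambda>z. (f1 z)\<^sup>2) \<le> V"
  proof -
    have "EE J (\<lambda>z. (f1 z)\<^sup>2) = EE P (\<lambda>c. EE (est c) (\<lambda>e. (e - w c)\<^sup>2))" by (simp add: EJ f1_def)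
    also have "\<dots> \<le> EE P (\<lambda>c. V)"
      by (rule E_mono[OF finP]) (simp add: var)
    finally show ?thesis by simp
  qed
  have Ef2: "EE J f2 = 0"
  proof -
    have "EE J f2 = EE P (\<lambda>c. w c - Ew)" by (simp add: EJ f2_def)
    also have "\<dots> = 0" by (simp add: E_diff finP Ew_def)
    finally show ?thesis .
  qed
  have Ef2sq: "EE J (\<lambda>z. (f2 z)\<^sup>2) \<le> (hi - lo)\<^sup>2 / 4"
  proof -
    have "EE J (\<lambda>z. (f2 z)\<^sup>2) = EE P (\<lambda>c. (w c - EE P w)\<^sup>2)" by (simp add: EJ f2_def Ew_def)
    also have "\<dots> \<le> (hi - lo)\<^sup>2 / 4" by (rule var_interval[OF finP bnd])
    finally show ?thesis .
  qed
  have pw: "\<bar>sum_list (map snd ces) / real M - Ew\<bar>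
      \<le> (\<bar>sum_list (map f1 ces)\<bar> + \<bar>sum_list (map f2 ces)\<bar>) / real M"
    if "ces \<in> set_pmf (iid_pmf M J)" for ces
  proof -
    have len: "length ces = M" using set_iid[OF that] by simp
    have "sum_list (map f1 ces) + sum_list (map f2 ces) = sum_list (map (\<lambda>z. snd z - Ew) ces)"
      by (induction ces) (auto simp: f1_def f2_def)
    also have "\<dots> = sum_list (map snd ces) - real M * Ew"
      using len by (induction ces arbitrary: M) (auto simp: algebra_simps)
    finally have e: "sum_list (map snd ces) / real M - Ew = (sum_list (map f1 ces) + sum_list (map f2 ces)) / real M"
      using M by (simp add: field_simps)
    show ?thesis unfolding e using M
      by (simp add: abs_triangle_ineq divide_right_mono)
  qed
  have "EE (iid_pmf M J) (\<lambda>ces. \<bar>sum_list (map snd ces) / real M - Ew\<bar>)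
      \<le> EE (iid_pmf M J) (\<lambda>ces. (\<bar>sum_list (map f1 ces)\<bar> + \<bar>sum_list (map f2 ces)\<bar>) / real M)"
    by (rule E_mono[OF finI pw])
  also have "\<dots> = (EE (iid_pmf M J) (\<lambda>ces. \<bar>sum_list (map f1 ces)\<bar>)
                 + EE (iid_pmf M J) (\<lambda>ces. \<bar>sum_list (map f2 ces)\<bar>)) / real M"
    by (simp add: E_add finI)
  also have "\<dots> \<le> (sqrt (real M * V) + sqrt (real M * ((hi - lo)\<^sup>2 / 4))) / real M"
  proof -
    have a: "EE (iid_pmf M J) (\<lambda>ces. \<bar>sum_list (map f1 ces)\<bar>) \<le> sqrt (real M * V)"
    proof -
      have "EE (iid_pmf M J) (\<lambda>ces. \<bar>sum_list (map f1 ces)\<bar>)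
          \<le> sqrt (EE (iid_pmf M J) (\<lambda>ces. (sum_list (map f1 ces))\<^sup>2))"
        by (rule E_abs_sqrt[OF finI])
      also have "\<dots> = sqrt (real M * EE J (\<lambda>z. (f1 z)\<^sup>2))"
        by (simp add: E_iid_sq[OF finJ Ef1])
      also have "\<dots> \<le> sqrt (real M * V)"
        using mult_left_mono[OF Ef1sq, of "real M"] by simp
      finally show ?thesis .
    qed
    have b: "EE (iid_pmf M J) (\<lambda>ces. \<bar>sum_list (map f2 ces)\<bar>) \<le> sqrt (real M * ((hi - lo)\<^sup>2 / 4))"
    proof -
      have "EE (iid_pmf M J) (\<lambda>ces. \<bar>sum_list (map f2 ces)\<bar>)
          \<le> sqrt (EE (iid_pmf M J) (\<lambda>ces. (sum_list (map f2 ces))\<^sup>2))"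
        by (rule E_abs_sqrt[OF finI])
      also have "\<dots> = sqrt (real M * EE J (\<lambda>z. (f2 z)\<^sup>2))"
        by (simp add: E_iid_sq[OF finJ Ef2])
      also have "\<dots> \<le> sqrt (real M * ((hi - lo)\<^sup>2 / 4))"
        using mult_left_mono[OF Ef2sq, of "real M"] by simp
      finally show ?thesis .
    qed
    show ?thesis using a b M by (simp add: divide_right_mono)
  qed
  also have "\<dots> = sqrt (V / real M) + sqrt (((hi - lo)\<^sup>2 / 4) / real M)"
    using M sqrt_avg[OF M, of V] sqrt_avg[OF M, of "(hi - lo)\<^sup>2 / 4"]
    by (simp only: add_divide_distrib)
  also have "sqrt (((hi - lo)\<^sup>2 / 4) / real M) \<le> (hi - lo) / (2 * sqrt (real M))"
  proof -
    have "sqrt (((hi - lo)\<^sup>2 / 4) / real M) = \<bar>hi - lo\<bar> / (2 * sqrt (real M))"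
      by (simp add: real_sqrt_divide real_sqrt_mult)
    moreover obtain c where "c \<in> set_pmf P" using set_pmf_not_empty[of P] by blast
    then have "lo \<le> hi" using bnd by force
    ultimately show ?thesis by simp
  qed
  finally show ?thesis unfolding J_def Ew_def by simp
qed

lemma filter_upt_eq: "filter (\<lambda>k. k = m) [0..<M] = (if m < M then [m] else [])"
  by (induction M) auto

lemma pmf_list_upt:
  assumes nn: "\<And>m. m < M \<Longrightarrow> 0 \<le> v m" and s1: "(\<Sum>m<M. v m) = 1"
  shows "pmf (pmf_of_list (map (\<lambda>m. (m, v m)) [0..<M])) m = (if m < M then v m else 0)"
    and "set_pmf (pmf_of_list (map (\<lambda>m. (m, v m)) [0..<M])) \<subseteq> {..<M}"
proof -
  have wf: "pmf_of_list_wf (map (\<lambda>m. (m, v m)) [0..<M])"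
  proof (rule pmf_of_list_wfI)
    show "\<And>x. x \<in> set (map snd (map (\<lambda>m. (m, v m)) [0..<M])) \<Longrightarrow> 0 \<le> x" using nn by auto
    have "sum_list (map snd (map (\<lambda>m. (m, v m)) [0..<M])) = sum_list (map v [0..<M])"
      by (simp add: comp_def)
    also have "\<dots> = (\<Sum>m<M. v m)"
      by (simp add: sum_list_distinct_conv_sum_set lessThan_atLeast0)
    finally show "sum_list (map snd (map (\<lambda>m. (m, v m)) [0..<M])) = 1" using s1 by simp
  qed
  have "filter (\<lambda>z. fst z = m) (map (\<lambda>m. (m, v m)) [0..<M]) = map (\<lambda>m. (m, v m)) (filter (\<lambda>k. k = m) [0..<M])"
    by (simp add: filter_map comp_def)
  then show "pmf (pmf_of_list (map (\<lambda>m. (m, v m)) [0..<M])) m = (if m < M then v m else 0)"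
    by (simp add: pmf_pmf_of_list[OF wf] filter_upt_eq)
  show "set_pmf (pmf_of_list (map (\<lambda>m. (m, v m)) [0..<M])) \<subseteq> {..<M}"
    using set_pmf_of_list[OF wf] by auto
qed

definition selw :: "('x \<times> real) list \<Rightarrow> nat \<Rightarrow> real" where
  "selw ces m = (if sum_list (map snd ces) = 0 then 1 / real (length ces)
                 else snd (ces ! m) / sum_list (map snd ces))"

lemma pmf_select:
  assumes nn: "\<And>z. z \<in> set ces \<Longrightarrow> 0 \<le> snd z" and len: "length ces \<ge> 1"
  shows "pmf (select_index (map snd ces)) m = (if m < length ces then selw ces m else 0)"
    and "set_pmf (select_index (map snd ces)) \<subseteq> {..<length ces}"
proof -
  define M where "M = length ces"
  have S: "sum_list (map snd ces) = (\<Sum>m<M. snd (ces ! m))"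
    by (simp add: M_def sum_list_sum_nth lessThan_atLeast0)
  have nnm: "\<And>m. m < M \<Longrightarrow> 0 \<le> snd (ces ! m)" using nn M_def by auto
  have Snn: "0 \<le> sum_list (map snd ces)" unfolding S using nnm by (intro sum_nonneg) auto
  have si: "select_index (map snd ces) = pmf_of_list (map (\<lambda>m. (m, selw ces m)) [0..<M])"
    by (auto simp: select_index_def Let_def selw_def M_def intro!: arg_cong[where f=pmf_of_list])
  have c1: "\<And>m. m < M \<Longrightarrow> 0 \<le> selw ces m" using nnm Snn by (simp add: selw_def)
  have c2: "(\<Sum>m<M. selw ces m) = 1"
  proof (cases "sum_list (map snd ces) = 0")
    case True then show ?thesis using len by (cases ces) (simp_all add: selw_def M_def)
  next
    case False then show ?thesis by (simp add: selw_def sum_divide_distrib[symmetric] S)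
  qed
  show "pmf (select_index (map snd ces)) m = (if m < length ces then selw ces m else 0)"
    unfolding si using pmf_list_upt(1)[OF c1 c2] M_def by simp
  show "set_pmf (select_index (map snd ces)) \<subseteq> {..<length ces}"
    unfolding si using pmf_list_upt(2)[OF c1 c2] M_def by simp
qed

lemma pointwise:
  fixes ces :: "('x::finite \<times> real) list" and Ew :: real
  assumes nn: "\<And>z. z \<in> set ces \<Longrightarrow> 0 \<le> snd z" and len: "length ces \<ge> 1" and Ew: "Ew > 0"
  shows "(\<Sum>c'\<in>UNIV. \<bar>(\<Sum>m<length ces. if fst (ces ! m) = c' then selw ces m else 0)
              - (\<Sum>m<length ces. if fst (ces ! m) = c' then snd (ces ! m) else 0) / (real (length ces) * Ew)\<bar>)
         \<le> \<bar>sum_list (map snd ces) / real (length ces) - Ew\<bar> / Ew"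
proof -
  define M where "M = length ces"
  define S where "S = sum_list (map snd ces)"
  define A where "A = (\<lambda>c'. \<Sum>m<M. if fst (ces ! m) = c' then snd (ces ! m) else 0)"
  have SS: "S = (\<Sum>m<M. snd (ces ! m))"
    by (simp add: M_def S_def sum_list_sum_nth lessThan_atLeast0)
  have nnm: "\<And>m. m < M \<Longrightarrow> 0 \<le> snd (ces ! m)" using nn M_def by auto
  have Mpos: "real M > 0" using len M_def by (cases ces) auto
  have Anneg: "0 \<le> A c'" for c' unfolding A_def using nnm by (intro sum_nonneg) auto
  have sumA: "(\<Sum>c'\<in>UNIV. A c') = S"
    unfolding A_def SS by (subst sum.swap) simp
  show ?thesis
  proof (cases "S = 0")
    case False
    have Spos: "S > 0" using False SS nnm sum_nonneg[of "{..<M}" "\<lambda>m. snd (ces ! m)"] by force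
    have sel: "(\<Sum>m<M. if fst (ces ! m) = c' then selw ces m else 0) = A c' / S" for c'
      unfolding A_def using False
      by (simp add: sum_divide_distrib; intro sum.cong; simp add: selw_def S_def)
    have "(\<Sum>c'\<in>UNIV. \<bar>A c' / S - A c' / (real M * Ew)\<bar>) = (\<Sum>c'\<in>UNIV. A c' * \<bar>1 / S - 1 / (real M * Ew)\<bar>)"
    proof (rule sum.cong)
      fix c' show "\<bar>A c' / S - A c' / (real M * Ew)\<bar> = A c' * \<bar>1 / S - 1 / (real M * Ew)\<bar>"
      proof -
        have "A c' / S - A c' / (real M * Ew) = A c' * (1 / S - 1 / (real M * Ew))"
          by (simp add: right_diff_distrib)
        then show ?thesis using Anneg[of c'] by (simp add: abs_mult)
      qed
    qed simp
    also have "\<dots> = S * \<bar>1 / S - 1 / (real M * Ew)\<bar>"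
      by (simp add: sum_distrib_right[symmetric] sumA)
    also have "\<dots> = \<bar>S / real M - Ew\<bar> / Ew"
    proof -
      have "S * \<bar>1 / S - 1 / (real M * Ew)\<bar> = \<bar>S * (1 / S - 1 / (real M * Ew))\<bar>"
        using Spos by (simp add: abs_mult)
      also have "S * (1 / S - 1 / (real M * Ew)) = (Ew - S / real M) / Ew"
        using Spos Mpos Ew by (simp add: field_simps)
      also have "\<bar>(Ew - S / real M) / Ew\<bar> = \<bar>S / real M - Ew\<bar> / Ew"
        using Ew by (simp add: abs_minus_commute)
      finally show ?thesis .
    qed
    finally show ?thesis using sel unfolding M_def[symmetric] S_def[symmetric] A_def by simp
  next
    case True
    have z: "\<And>m. m < M \<Longrightarrow> snd (ces ! m) = 0"
      using True SS nnm sum_nonneg_eq_0_iff[of "{..<M}" "\<lambda>m. snd (ces ! m)"] by auto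
    have A0: "A c' = 0" for c' unfolding A_def using z by (intro sum.neutral) auto
    have "(\<Sum>c'\<in>UNIV. \<bar>(\<Sum>m<M. if fst (ces ! m) = c' then selw ces m else 0)\<bar>)
        = (\<Sum>c'\<in>UNIV. (\<Sum>m<M. if fst (ces ! m) = c' then 1 / real M else 0))"
    proof (rule sum.cong[OF refl])
      fix c'
      have "(\<Sum>m<M. if fst (ces ! m) = c' then selw ces m else 0) = (\<Sum>m<M. if fst (ces ! m) = c' then 1 / real M else 0)"
        by (rule sum.cong[OF refl]) (use True in \<open>simp add: selw_def S_def M_def\<close>)
      moreover have "0 \<le> (\<Sum>m<M. if fst (ces ! m) = c' then 1 / real M else 0)"
        by (rule sum_nonneg) simp
      ultimately show "\<bar>(\<Sum>m<M. if fst (ces ! m) = c' then selw ces m else 0)\<bar> = (\<Sum>m<M. if fst (ces ! m) = c' then 1 / real M else 0)"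
        by simp
    qed
    also have "\<dots> = 1" using Mpos by (subst sum.swap) simp
    finally have "(\<Sum>c'\<in>UNIV. \<bar>(\<Sum>m<M. if fst (ces ! m) = c' then selw ces m else 0)\<bar>) = 1" .
    moreover have "\<bar>S / real M - Ew\<bar> / Ew = 1" using True Ew by simp
    ultimately show ?thesis using A0 unfolding M_def[symmetric] S_def[symmetric] A_def by simp
  qed
qed

lemma select_step:
  fixes P :: "'x::finite pmf" and est :: "'x \<Rightarrow> real pmf" and w :: "'x \<Rightarrow> real"
  assumes fin: "\<And>c. finite (set_pmf (est c))"
    and nn: "\<And>c e. c \<in> set_pmf P \<Longrightarrow> e \<in> set_pmf (est c) \<Longrightarrow> 0 \<le> e"
    and mean: "\<And>c. c \<in> set_pmf P \<Longrightarrow> EE (est c) (\<lambda>e. e) = w c"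
    and Ew: "EE P w > 0"
    and M: "M \<ge> 1"
  shows "(\<Sum>c'\<in>UNIV. \<bar>pmf (bind_pmf (iid_pmf M (bind_pmf P (\<lambda>c. bind_pmf (est c) (\<lambda>e. return_pmf (c, e)))))
              (\<lambda>ces. bind_pmf (select_index (map snd ces)) (\<lambda>m. return_pmf (fst (ces ! m))))) c'
            - pmf P c' * w c' / EE P w\<bar>)
     \<le> EE (iid_pmf M (bind_pmf P (\<lambda>c. bind_pmf (est c) (\<lambda>e. return_pmf (c, e)))))
            (\<lambda>ces. \<bar>sum_list (map snd ces) / real M - EE P w\<bar>) / EE P w"
proof -
  define J where "J = bind_pmf P (\<lambda>c. bind_pmf (est c) (\<lambda>e. return_pmf (c, e)))"
  define Ew where "Ew = EE P w"
  define sel where "sel = (\<lambda>(ces::('x \<times> real) list) c'. \<Sum>m<M. if fst (ces ! m) = c' then selw ces m else (0::real))"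
  define A where "A = (\<lambda>(ces::('x \<times> real) list) c'. \<Sum>m<M. if fst (ces ! m) = c' then snd (ces ! m) else 0)"
  define g where "g = (\<lambda>c' (z::'x \<times> real). if fst z = c' then snd z else 0)"
  have finJ: "finite (set_pmf J)" unfolding J_def by (rule finite_J[OF fin])
  have finI: "finite (set_pmf (iid_pmf M J))" by (rule finite_iid[OF finJ])
  have finP: "finite (set_pmf P)" by simp
  have EJ: "EE J h = EE P (\<lambda>c. EE (est c) (\<lambda>e. h (c, e)))" for h
    unfolding J_def by (rule E_J[OF fin])
  have nnJ: "0 \<le> snd z" if "z \<in> set_pmf J" for z
    using that nn unfolding J_def by auto
  have good: "length ces = M" "\<And>z. z \<in> set ces \<Longrightarrow> 0 \<le> snd z" if "ces \<in> set_pmf (iid_pmf M J)" for ces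
    using set_iid[OF that] nnJ by auto
  have pmfQ: "pmf (bind_pmf (select_index (map snd ces)) (\<lambda>m. return_pmf (fst (ces ! m)))) c' = sel ces c'"
    if "ces \<in> set_pmf (iid_pmf M J)" for ces c'
  proof -
    have l: "length ces \<ge> 1" using good(1)[OF that] M by simp
    have "pmf (bind_pmf (select_index (map snd ces)) (\<lambda>m. return_pmf (fst (ces ! m)))) c'
        = EE (select_index (map snd ces)) (\<lambda>m. pmf (return_pmf (fst (ces ! m))) c')"
      by (rule pmf_bind)
    also have "\<dots> = (\<Sum>m\<in>{..<M}. pmf (return_pmf (fst (ces ! m))) c' * pmf (select_index (map snd ces)) m)"
      by (rule integral_measure_pmf_real) (use pmf_select(2)[OF good(2)[OF that] l] good(1)[OF that] in auto)
    also have "\<dots> = sel ces c'"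
      unfolding sel_def
      by (rule sum.cong[OF refl]) (simp add: pmf_select(1)[OF good(2)[OF that] l] good(1)[OF that])
    finally show ?thesis .
  qed
  have EA: "EE (iid_pmf M J) (\<lambda>ces. A ces c') = real M * (pmf P c' * w c')" for c'
  proof -
    have "EE (iid_pmf M J) (\<lambda>ces. A ces c') = EE (iid_pmf M J) (\<lambda>ces. sum_list (map (g c') ces))"
    proof (rule E_cong)
      fix ces assume "ces \<in> set_pmf (iid_pmf M J)"
      then have "length ces = M" by (rule good(1))
      then show "A ces c' = sum_list (map (g c') ces)"
        by (simp add: A_def g_def sum_list_sum_nth lessThan_atLeast0)
    qed
    also have "\<dots> = real M * EE J (g c')" by (rule E_iid_sum[OF finJ])
    also have "EE J (g c') = EE P (\<lambda>c. if c = c' then w c else 0)"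
      unfolding EJ by (rule E_cong) (auto simp: g_def mean)
    also have "\<dots> = (\<Sum>a\<in>{c'}. (if a = c' then w a else 0) * pmf P a)"
      by (rule integral_measure_pmf_real) (auto split: if_splits)
    finally show ?thesis by simp
  qed
  have diff: "pmf (bind_pmf (iid_pmf M J) (\<lambda>ces. bind_pmf (select_index (map snd ces)) (\<lambda>m. return_pmf (fst (ces ! m))))) c'
            - pmf P c' * w c' / Ew = EE (iid_pmf M J) (\<lambda>ces. sel ces c' - A ces c' / (real M * Ew))" for c'
  proof -
    have "pmf (bind_pmf (iid_pmf M J) (\<lambda>ces. bind_pmf (select_index (map snd ces)) (\<lambda>m. return_pmf (fst (ces ! m))))) c'
        = EE (iid_pmf M J) (\<lambda>ces. sel ces c')"
      by (subst pmf_bind, rule E_cong, rule pmfQ)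
    moreover have "EE (iid_pmf M J) (\<lambda>ces. A ces c' / (real M * Ew)) = pmf P c' * w c' / Ew"
      using EA[of c'] M by simp
    ultimately show ?thesis by (simp add: E_diff finI)
  qed
  have "(\<Sum>c'\<in>UNIV. \<bar>pmf (bind_pmf (iid_pmf M J) (\<lambda>ces. bind_pmf (select_index (map snd ces)) (\<lambda>m. return_pmf (fst (ces ! m))))) c'
            - pmf P c' * w c' / Ew\<bar>)
      = (\<Sum>c'\<in>UNIV. \<bar>EE (iid_pmf M J) (\<lambda>ces. sel ces c' - A ces c' / (real M * Ew))\<bar>)"
    by (simp add: diff)
  also have "\<dots> \<le> (\<Sum>c'\<in>UNIV. EE (iid_pmf M J) (\<lambda>ces. \<bar>sel ces c' - A ces c' / (real M * Ew)\<bar>))"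
    by (rule sum_mono) (rule integral_abs_bound)
  also have "\<dots> = EE (iid_pmf M J) (\<lambda>ces. \<Sum>c'\<in>UNIV. \<bar>sel ces c' - A ces c' / (real M * Ew)\<bar>)"
    by (rule Bochner_Integration.integral_sum[symmetric]) (simp add: integrable_measure_pmf_finite finI)
  also have "\<dots> \<le> EE (iid_pmf M J) (\<lambda>ces. \<bar>sum_list (map snd ces) / real M - Ew\<bar> / Ew)"
  proof (rule E_mono[OF finI])
    fix ces assume h: "ces \<in> set_pmf (iid_pmf M J)"
    have l: "length ces \<ge> 1" using good(1)[OF h] M by simp
    show "(\<Sum>c'\<in>UNIV. \<bar>sel ces c' - A ces c' / (real M * Ew)\<bar>) \<le> \<bar>sum_list (map snd ces) / real M - Ew\<bar> / Ew"
      using pointwise[OF good(2)[OF h] l, of Ew] Ew good(1)[OF h]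
      unfolding sel_def A_def Ew_def by simp
  qed
  also have "\<dots> = EE (iid_pmf M J) (\<lambda>ces. \<bar>sum_list (map snd ces) / real M - Ew\<bar>) / Ew"
    by simp
  finally show ?thesis unfolding J_def Ew_def .
qed

definition Evd :: "(nat \<Rightarrow> 'x::finite \<Rightarrow> 'x pmf) \<Rightarrow> ('x \<Rightarrow> real) \<Rightarrow> nat \<Rightarrow> 'x \<Rightarrow> real" where
  "Evd st W j x = (\<Sum>x0\<in>UNIV. pmf (ref_down st j 0 x) x0 * W x0)"

definition goodd :: "(nat \<Rightarrow> 'x \<Rightarrow> 'x pmf) \<Rightarrow> (nat \<Rightarrow> 'x \<Rightarrow> bool) \<Rightarrow> nat \<Rightarrow> 'x \<Rightarrow> bool" where
  "goodd st ok i x = (\<forall>j<i. \<forall>xs\<in>set_pmf (ref_down st (i - j) j x). ok j xs)"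

lemma goodd_desc:
  assumes "goodd st ok (Suc i) x" "x' \<in> set_pmf (st (Suc i) x)"
  shows "goodd st ok i x'" "ok i x'"
proof -
  show "goodd st ok i x'" unfolding goodd_def
  proof (intro allI impI ballI)
    fix j xs assume j: "j < i" and xs: "xs \<in> set_pmf (ref_down st (i - j) j x')"
    have "Suc i - j = Suc (i - j)" "j + Suc (i - j) = Suc i" using j by auto
    then have "xs \<in> set_pmf (ref_down st (Suc i - j) j x)" using xs assms(2) by auto
    then show "ok j xs" using assms(1) j unfolding goodd_def by auto
  qed
  have "x' \<in> set_pmf (ref_down st (Suc i - i) i x)" using assms(2) by simp
  then show "ok i x'" using assms(1) unfolding goodd_def by auto
qed

lemma pmf_bind_fin:
  fixes p :: "'a::finite pmf"
  shows "pmf (bind_pmf p f) x = (\<Sum>a\<in>UNIV. pmf p a * pmf (f a) x)"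
  by (subst pmf_bind, subst integral_measure_pmf_real[of UNIV]) (auto simp: mult.commute)

lemma Evd_pos:
  assumes "\<And>x. W x > 0"
  shows "Evd st W j x > 0"
proof -
  obtain a where a: "a \<in> set_pmf (ref_down st j 0 x)" using set_pmf_not_empty[of "ref_down st j 0 x"] by blast
  show ?thesis unfolding Evd_def
    by (rule sum_pos2[of UNIV a]) (use a assms in \<open>auto simp: set_pmf_iff less_imp_le\<close>)
qed

lemma chain:
  fixes st :: "nat \<Rightarrow> 'x::finite \<Rightarrow> 'x pmf" and R Qs :: "nat \<Rightarrow> 'x \<Rightarrow> 'x pmf" and W :: "'x \<Rightarrow> real"
  assumes Wpos: "\<And>x. W x > 0"
    and R0: "\<And>x. R 0 x = return_pmf x"
    and RS: "\<And>i x. R (Suc i) x = bind_pmf (Qs (Suc i) x) (R i)"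
    and stepb: "\<And>i x. (\<And>x'. x' \<in> set_pmf (st (Suc i) x) \<Longrightarrow> ok i x') \<Longrightarrow>
       (\<Sum>x'\<in>UNIV. \<bar>pmf (Qs (Suc i) x) x' - pmf (st (Suc i) x) x' * Evd st W i x' / Evd st W (Suc i) x\<bar>)
         \<le> \<delta> / Evd st W (Suc i) x"
  shows "goodd st ok i x \<Longrightarrow> Evd st W i x * (\<Sum>x0\<in>UNIV. \<bar>pmf (R i x) x0 - pmf (ref_down st i 0 x) x0 * W x0 / Evd st W i x\<bar>)
           \<le> real i * \<delta>"
proof (induction i arbitrary: x)
  case 0
  have "pmf (return_pmf x) x0 - pmf (return_pmf x) x0 * W x0 / (W x) = 0" for x0
    using Wpos[of x] by (auto simp: indicator_def)
  then show ?case by (simp add: R0 Evd_def indicator_def)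
next
  case (Suc i)
  define P where "P = st (Suc i) x"
  define Q where "Q = Qs (Suc i) x"
  define E1 where "E1 = Evd st W (Suc i) x"
  define E0 where "E0 = Evd st W i"
  define rp where "rp = (\<lambda>x'. pmf (ref_down st i 0 x'))"
  define Rp where "Rp = (\<lambda>x'. pmf (R i x'))"
  define \<pi> where "\<pi> = (\<lambda>x'. pmf P x' * E0 x' / E1)"
  define T where "T = (\<lambda>x' x0. rp x' x0 * W x0 / E0 x')"
  have E0pos: "E0 x' > 0" for x' unfolding E0_def by (rule Evd_pos[OF Wpos])
  have E1pos: "E1 > 0" unfolding E1_def by (rule Evd_pos[OF Wpos])
  have f1: "pmf (R (Suc i) x) x0 = (\<Sum>x'\<in>UNIV. pmf Q x' * Rp x' x0)" for x0
    by (simp add: RS pmf_bind_fin Q_def Rp_def)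
  have f2: "pmf (ref_down st (Suc i) 0 x) x0 = (\<Sum>x'\<in>UNIV. pmf P x' * rp x' x0)" for x0
    by (simp add: pmf_bind_fin P_def rp_def)
  have f3: "E1 = (\<Sum>x'\<in>UNIV. pmf P x' * E0 x')"
  proof -
    have "E1 = (\<Sum>x0\<in>UNIV. \<Sum>x'\<in>UNIV. pmf P x' * rp x' x0 * W x0)"
      unfolding E1_def Evd_def f2 by (simp add: sum_distrib_right)
    also have "\<dots> = (\<Sum>x'\<in>UNIV. pmf P x' * E0 x')"
      by (subst sum.swap) (simp add: E0_def Evd_def rp_def sum_distrib_left mult.assoc)
    finally show ?thesis .
  qed
  have f4: "pmf (ref_down st (Suc i) 0 x) x0 * W x0 / E1 = (\<Sum>x'\<in>UNIV. \<pi> x' * T x' x0)" for x0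
  proof -
    have "pmf (ref_down st (Suc i) 0 x) x0 * W x0 / E1 = (\<Sum>x'\<in>UNIV. pmf P x' * rp x' x0 * W x0 / E1)"
      unfolding f2 by (simp add: sum_distrib_right sum_divide_distrib)
    also have "\<dots> = (\<Sum>x'\<in>UNIV. \<pi> x' * T x' x0)"
    proof (intro sum.cong refl)
      fix x' show "pmf P x' * rp x' x0 * W x0 / E1 = \<pi> x' * T x' x0"
        using E0pos[of x'] by (simp add: \<pi>_def T_def)
    qed
    finally show ?thesis .
  qed
  have pinn: "\<pi> x' \<ge> 0" for x' using E0pos[of x'] E1pos by (simp add: \<pi>_def)
  have "(\<Sum>x0\<in>UNIV. \<bar>pmf (R (Suc i) x) x0 - pmf (ref_down st (Suc i) 0 x) x0 * W x0 / E1\<bar>)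
      = (\<Sum>x0\<in>UNIV. \<bar>\<Sum>x'\<in>UNIV. (pmf Q x' * Rp x' x0 - \<pi> x' * T x' x0)\<bar>)"
    unfolding f1 f4 by (simp add: sum_subtractf)
  also have "\<dots> \<le> (\<Sum>x0\<in>UNIV. \<Sum>x'\<in>UNIV. (\<bar>pmf Q x' - \<pi> x'\<bar> * Rp x' x0 + \<pi> x' * \<bar>Rp x' x0 - T x' x0\<bar>))"
  proof (rule sum_mono)
    fix x0
    have "\<bar>\<Sum>x'\<in>UNIV. (pmf Q x' * Rp x' x0 - \<pi> x' * T x' x0)\<bar> \<le> (\<Sum>x'\<in>UNIV. \<bar>pmf Q x' * Rp x' x0 - \<pi> x' * T x' x0\<bar>)"
      by (rule sum_abs)
    also have "\<dots> \<le> (\<Sum>x'\<in>UNIV. (\<bar>pmf Q x' - \<pi> x'\<bar> * Rp x' x0 + \<pi> x' * \<bar>Rp x' x0 - T x' x0\<bar>))"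
    proof (rule sum_mono)
      fix x'
      have "pmf Q x' * Rp x' x0 - \<pi> x' * T x' x0 = (pmf Q x' - \<pi> x') * Rp x' x0 + \<pi> x' * (Rp x' x0 - T x' x0)"
        by (simp add: algebra_simps)
      also have "\<bar>\<dots>\<bar> \<le> \<bar>pmf Q x' - \<pi> x'\<bar> * Rp x' x0 + \<pi> x' * \<bar>Rp x' x0 - T x' x0\<bar>"
        using pinn[of x'] abs_triangle_ineq[of "(pmf Q x' - \<pi> x') * Rp x' x0" "\<pi> x' * (Rp x' x0 - T x' x0)"]
        by (simp add: abs_mult Rp_def)
      finally show "\<bar>pmf Q x' * Rp x' x0 - \<pi> x' * T x' x0\<bar> \<le> \<bar>pmf Q x' - \<pi> x'\<bar> * Rp x' x0 + \<pi> x' * \<bar>Rp x' x0 - T x' x0\<bar>" .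
    qed
    finally show "\<bar>\<Sum>x'\<in>UNIV. (pmf Q x' * Rp x' x0 - \<pi> x' * T x' x0)\<bar> \<le> (\<Sum>x'\<in>UNIV. (\<bar>pmf Q x' - \<pi> x'\<bar> * Rp x' x0 + \<pi> x' * \<bar>Rp x' x0 - T x' x0\<bar>))" .
  qed
  also have "\<dots> = (\<Sum>x'\<in>UNIV. \<bar>pmf Q x' - \<pi> x'\<bar> * (\<Sum>x0\<in>UNIV. Rp x' x0))
        + (\<Sum>x'\<in>UNIV. \<pi> x' * (\<Sum>x0\<in>UNIV. \<bar>Rp x' x0 - T x' x0\<bar>))"
    by (subst sum.swap) (simp add: sum.distrib sum_distrib_left)
  also have "\<dots> = (\<Sum>x'\<in>UNIV. \<bar>pmf Q x' - \<pi> x'\<bar>) + (\<Sum>x'\<in>UNIV. \<pi> x' * (\<Sum>x0\<in>UNIV. \<bar>Rp x' x0 - T x' x0\<bar>))"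
    by (simp add: Rp_def sum_pmf_eq_1)
  finally have main: "(\<Sum>x0\<in>UNIV. \<bar>pmf (R (Suc i) x) x0 - pmf (ref_down st (Suc i) 0 x) x0 * W x0 / E1\<bar>)
      \<le> (\<Sum>x'\<in>UNIV. \<bar>pmf Q x' - \<pi> x'\<bar>) + (\<Sum>x'\<in>UNIV. \<pi> x' * (\<Sum>x0\<in>UNIV. \<bar>Rp x' x0 - T x' x0\<bar>))" .
  have s1: "E1 * (\<Sum>x'\<in>UNIV. \<bar>pmf Q x' - \<pi> x'\<bar>) \<le> \<delta>"
  proof -
    have "(\<Sum>x'\<in>UNIV. \<bar>pmf Q x' - \<pi> x'\<bar>) \<le> \<delta> / E1"
      unfolding Q_def \<pi>_def P_def E0_def E1_def
      by (rule stepb) (rule goodd_desc(2)[OF Suc.prems])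
    then show ?thesis using E1pos by (simp add: field_simps)
  qed
  have s2: "E1 * (\<Sum>x'\<in>UNIV. \<pi> x' * (\<Sum>x0\<in>UNIV. \<bar>Rp x' x0 - T x' x0\<bar>)) \<le> real i * \<delta>"
  proof -
    have "E1 * (\<Sum>x'\<in>UNIV. \<pi> x' * (\<Sum>x0\<in>UNIV. \<bar>Rp x' x0 - T x' x0\<bar>))
        = (\<Sum>x'\<in>UNIV. pmf P x' * (E0 x' * (\<Sum>x0\<in>UNIV. \<bar>Rp x' x0 - T x' x0\<bar>)))"
      using E1pos by (simp add: sum_distrib_left \<pi>_def mult.assoc)
    also have "\<dots> \<le> (\<Sum>x'\<in>UNIV. pmf P x' * (real i * \<delta>))"
    proof (rule sum_mono)
      fix x'
      show "pmf P x' * (E0 x' * (\<Sum>x0\<in>UNIV. \<bar>Rp x' x0 - T x' x0\<bar>)) \<le> pmf P x' * (real i * \<delta>)"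
      proof (cases "x' \<in> set_pmf P")
        case True
        have "E0 x' * (\<Sum>x0\<in>UNIV. \<bar>Rp x' x0 - T x' x0\<bar>) \<le> real i * \<delta>"
          using Suc.IH[OF goodd_desc(1)[OF Suc.prems True[unfolded P_def]]]
          by (simp add: E0_def Rp_def T_def rp_def)
        then show ?thesis by (simp add: mult_left_mono)
      next
        case False then show ?thesis by (simp add: set_pmf_iff)
      qed
    qed
    also have "\<dots> = real i * \<delta>" by (simp add: sum_distrib_right[symmetric] sum_pmf_eq_1)
    finally show ?thesis .
  qed
  have "E1 * (\<Sum>x0\<in>UNIV. \<bar>pmf (R (Suc i) x) x0 - pmf (ref_down st (Suc i) 0 x) x0 * W x0 / E1\<bar>)
      \<le> E1 * ((\<Sum>x'\<in>UNIV. \<bar>pmf Q x' - \<pi> x'\<bar>) + (\<Sum>x'\<in>UNIV. \<pi> x' * (\<Sum>x0\<in>UNIV. \<bar>Rp x' x0 - T x' x0\<bar>)))"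
    using main E1pos by (simp add: mult_left_mono)
  also have "\<dots> \<le> \<delta> + real i * \<delta>" using s1 s2 by (simp add: distrib_left)
  finally show ?case by (simp add: E1_def algebra_simps)
qed

lemma E_t:
  fixes pr sm :: "'x::finite pmf" and W :: "'x \<Rightarrow> real"
  assumes pos: "\<And>x0. pmf pr x0 > 0 \<Longrightarrow> pmf sm x0 > 0"
  shows "EE sm (\<lambda>x0. pmf pr x0 / pmf sm x0 * W x0) = (\<Sum>x0\<in>UNIV. pmf pr x0 * W x0)"
proof -
  have "EE sm (\<lambda>x0. pmf pr x0 / pmf sm x0 * W x0) = (\<Sum>x0\<in>UNIV. (pmf pr x0 / pmf sm x0 * W x0) * pmf sm x0)"
    by (rule integral_measure_pmf_real) auto
  also have "\<dots> = (\<Sum>x0\<in>UNIV. pmf pr x0 * W x0)"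
  proof (rule sum.cong[OF refl])
    fix x0
    show "(pmf pr x0 / pmf sm x0 * W x0) * pmf sm x0 = pmf pr x0 * W x0"
    proof (cases "pmf sm x0 = 0")
      case True
      then have "\<not> pmf pr x0 > 0" using pos[of x0] by auto
      then have "pmf pr x0 = 0" using pmf_nonneg[of pr x0] by linarith
      then show ?thesis using True by simp
    next
      case False then show ?thesis by simp
    qed
  qed
  finally show ?thesis .
qed

lemma energy_mean:
  fixes pr sm :: "'x::finite pmf" and W :: "'x \<Rightarrow> real"
  assumes pos: "\<And>x0. pmf pr x0 > 0 \<Longrightarrow> pmf sm x0 > 0" and K: "K \<ge> 1"
  shows "EE (map_pmf (\<lambda>s. (\<Sum>x0\<leftarrow>s. pmf pr x0 / pmf sm x0 * W x0) / real (length s)) (iid_pmf K sm)) (\<lambda>e. e)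
       = (\<Sum>x0\<in>UNIV. pmf pr x0 * W x0)"
proof -
  define t where "t = (\<lambda>x0. pmf pr x0 / pmf sm x0 * W x0)"
  have fin: "finite (set_pmf sm)" by simp
  have "EE (map_pmf (\<lambda>s. (\<Sum>x0\<leftarrow>s. pmf pr x0 / pmf sm x0 * W x0) / real (length s)) (iid_pmf K sm)) (\<lambda>e. e)
      = EE (iid_pmf K sm) (\<lambda>s. sum_list (map t s) / real K)"
    unfolding integral_map_pmf by (rule E_cong) (simp add: set_iid t_def)
  also have "\<dots> = EE sm t"
    using K by (simp add: E_iid_sum[OF fin])
  also have "\<dots> = (\<Sum>x0\<in>UNIV. pmf pr x0 * W x0)"
    unfolding t_def by (rule E_t[OF pos])
  finally show ?thesis .
qed

lemma sum_list_minus_const: "sum_list (map (\<lambda>x. f x - c) xs) = sum_list (map f xs) - real (length xs) * (c::real)"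
  by (induction xs) (auto simp: algebra_simps)

lemma energy_var:
  fixes pr sm :: "'x::finite pmf" and W :: "'x \<Rightarrow> real"
  assumes pos: "\<And>x0. pmf pr x0 > 0 \<Longrightarrow> pmf sm x0 > 0" and K: "K \<ge> 1"
    and rat: "\<And>x0. pmf pr x0 / pmf sm x0 \<le> L"
    and Wb: "\<And>x0. 0 \<le> W x0 \<and> W x0 \<le> hi"
  shows "EE (map_pmf (\<lambda>s. (\<Sum>x0\<leftarrow>s. pmf pr x0 / pmf sm x0 * W x0) / real (length s)) (iid_pmf K sm))
            (\<lambda>e. (e - (\<Sum>x0\<in>UNIV. pmf pr x0 * W x0))\<^sup>2) \<le> (L * hi)\<^sup>2 / (4 * real K)"
proof -
  define t where "t = (\<lambda>x0. pmf pr x0 / pmf sm x0 * W x0)"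
  define w where "w = (\<Sum>x0\<in>UNIV. pmf pr x0 * W x0)"
  have fin: "finite (set_pmf sm)" by simp
  have Et: "EE sm t = w" unfolding t_def w_def by (rule E_t[OF pos])
  have Et0: "EE sm (\<lambda>x0. t x0 - w) = 0" by (simp add: E_diff fin Et)
  have Kp: "real K > 0" using K by simp
  have "EE (map_pmf (\<lambda>s. (\<Sum>x0\<leftarrow>s. pmf pr x0 / pmf sm x0 * W x0) / real (length s)) (iid_pmf K sm))
            (\<lambda>e. (e - w)\<^sup>2)
      = EE (iid_pmf K sm) (\<lambda>s. (sum_list (map (\<lambda>x0. t x0 - w) s))\<^sup>2 / (real K)\<^sup>2)"
  proof (simp only: integral_map_pmf, rule E_cong)
    fix s assume "s \<in> set_pmf (iid_pmf K sm)"
    then have l: "length s = K" by (simp add: set_iid)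
    have "(\<Sum>x0\<leftarrow>s. pmf pr x0 / pmf sm x0 * W x0) / real (length s) - w = (sum_list (map (\<lambda>x0. t x0 - w) s)) / real K"
      using Kp l by (simp add: sum_list_minus_const t_def field_simps)
    then show "((\<Sum>x0\<leftarrow>s. pmf pr x0 / pmf sm x0 * W x0) / real (length s) - w)\<^sup>2
        = (sum_list (map (\<lambda>x0. t x0 - w) s))\<^sup>2 / (real K)\<^sup>2"
      by (simp add: power_divide)
  qed
  also have "\<dots> = real K * EE sm (\<lambda>x0. (t x0 - w)\<^sup>2) / (real K)\<^sup>2"
    by (simp add: E_iid_sq[OF fin Et0])
  also have "\<dots> \<le> real K * ((L * hi - 0)\<^sup>2 / 4) / (real K)\<^sup>2"
  proof -
    have b: "0 \<le> t x0 \<and> t x0 \<le> L * hi" for x0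
    proof -
      have r0: "0 \<le> pmf pr x0 / pmf sm x0" by simp
      have "t x0 \<le> L * hi" unfolding t_def
        using mult_mono[OF rat[of x0] conjunct2[OF Wb[of x0]] _ conjunct1[OF Wb[of x0]]] r0 rat[of x0] by linarith
      moreover have "0 \<le> t x0" unfolding t_def using r0 Wb[of x0] by simp
      ultimately show ?thesis by simp
    qed
    have "EE sm (\<lambda>x0. (t x0 - EE sm t)\<^sup>2) \<le> (L * hi - 0)\<^sup>2 / 4"
      by (rule var_interval[OF fin]) (use b in auto)
    then have "real K * EE sm (\<lambda>x0. (t x0 - w)\<^sup>2) \<le> real K * ((L * hi - 0)\<^sup>2 / 4)"
      using Kp by (simp add: Et)
    then show ?thesis by (rule divide_right_mono) simp
  qed
  also have "\<dots> = (L * hi)\<^sup>2 / (4 * real K)"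
    using Kp by (simp add: power2_eq_square field_simps)
  finally show ?thesis unfolding w_def .
qed

lemma Evd_Suc:
  "Evd st W (Suc i) x = (\<Sum>x'\<in>UNIV. pmf (st (Suc i) x) x' * Evd st W i x')"
proof -
  have "Evd st W (Suc i) x = (\<Sum>x0\<in>UNIV. \<Sum>x'\<in>UNIV. pmf (st (Suc i) x) x' * pmf (ref_down st i 0 x') x0 * W x0)"
    unfolding Evd_def by (simp add: pmf_bind_fin sum_distrib_right)
  also have "\<dots> = (\<Sum>x'\<in>UNIV. pmf (st (Suc i) x) x' * Evd st W i x')"
    by (subst sum.swap) (simp add: Evd_def sum_distrib_left mult.assoc)
  finally show ?thesis .
qed

lemma TV_le_1:
  fixes q :: "'x::finite pmf" and t :: "'x \<Rightarrow> real"
  assumes "\<And>x. t x \<ge> 0" "(\<Sum>x\<in>UNIV. t x) = 1"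
  shows "TV (pmf q) t \<le> 1"
proof -
  have "(\<Sum>x\<in>UNIV. \<bar>pmf q x - t x\<bar>) \<le> (\<Sum>x\<in>UNIV. pmf q x + t x)"
    by (rule sum_mono) (use assms(1) in \<open>simp add: abs_le_iff\<close>)
  also have "\<dots> = 2" by (simp add: sum.distrib sum_pmf_eq_1 assms(2))
  finally show ?thesis by (simp add: TV_def)
qed



theorem theorem1:
  fixes step small :: "'y \<Rightarrow> nat \<Rightarrow> 'x::finite \<Rightarrow> 'x pmf"
    and r :: "'y \<Rightarrow> 'x \<Rightarrow> real"
    and y :: 'y and xT :: 'x
    and lam D L \<epsilon> :: real and M K I :: nat
  assumes r_bound: "\<And>x0. - D \<le> r y x0 \<and> r y x0 \<le> D"
    and lam: "lam > 0"
    and L: "L > 0"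
    and ratio: "\<And>j xs x0. j < I \<Longrightarrow> xs \<in> set_pmf (ref_marg step y I xT j) \<Longrightarrow>
        (pmf (ref_post step y j xs) x0 > 0 \<longrightarrow> pmf (small y j xs) x0 > 0) \<and>
        pmf (ref_post step y j xs) x0 / pmf (small y j xs) x0 \<le> L"
    and M: "M \<ge> 1" and K: "K \<ge> 1" and I: "I \<ge> 1"
    and eps: "\<epsilon> > 0"
    and pos: "norm_const step r lam y I xT - \<epsilon> - g_fun \<epsilon> M K L lam D > 0"
  shows "TV (pmf (ets_output step small r lam M K I y xT)) (target step r lam y I xT)
    \<le> real I * ((2 * \<epsilon> + g_fun \<epsilon> M K L lam D)
                 / (norm_const step r lam y I xT - \<epsilon> - g_fun \<epsilon> M K L lam D))
      + 4 * real I * exp (- (2 * real K * \<epsilon>^2) / (L^2 * exp (2 * D / lam)))"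
proof -
  define W where "W = (\<lambda>x0. exp (r y x0 / lam))"
  define hi where "hi = exp (D / lam)"
  define lo where "lo = exp (- D / lam)"
  define C where "C = norm_const step r lam y I xT"
  define g where "g = g_fun \<epsilon> M K L lam D"
  define R where "R = L * hi"
  have D0: "D \<ge> 0" using r_bound[of xT] by linarith
  have Wb: "lo \<le> W x0 \<and> W x0 \<le> hi" for x0
    using divide_right_mono[of "-D" "r y x0" lam] divide_right_mono[of "r y x0" D lam] r_bound[of x0] lam
    by (simp add: W_def lo_def hi_def)
  have Wpos: "W x0 > 0" for x0 by (simp add: W_def)
  have hilo: "lo \<le> hi" using Wb[of xT] by simp
  have hipos: "hi > 0" by (simp add: hi_def)
  have exp2: "exp (2 * D / lam) = hi\<^sup>2"
  proof -
    have "2 * D / lam = D / lam + D / lam" by simp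
    then show ?thesis by (simp add: hi_def exp_add[symmetric] power2_eq_square)
  qed
  have LR: "L\<^sup>2 * exp (2 * D / lam) = R\<^sup>2" by (simp add: exp2 R_def power_mult_distrib)
  have Rpos: "R > 0" using L hipos by (simp add: R_def)
  have C_eq: "C = Evd (step y) W I xT"
    by (simp add: C_def norm_const_def Evd_def ref_post_def W_def)
  have Cpos: "C > 0" unfolding C_eq by (rule Evd_pos[OF Wpos])
  have tgt: "target step r lam y I xT x0 = pmf (ref_down (step y) I 0 xT) x0 * W x0 / C" for x0
    by (simp add: target_def C_def ref_post_def W_def)
  have g_eq: "g = (hi - lo) / 2 * sqrt (4 * real K * \<epsilon>\<^sup>2 / (real M * R\<^sup>2))"
    by (simp add: g_def g_fun_def hi_def lo_def LR[symmetric] mult.assoc)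
  have g0: "g \<ge> 0" unfolding g_eq using hilo by simp
  have den: "C - \<epsilon> - g > 0" using pos by (simp add: C_def g_def)
  have first0: "0 \<le> real I * ((2 * \<epsilon> + g) / (C - \<epsilon> - g))"
    using den g0 eps by simp
  have ex_eq: "exp (- (2 * real K * \<epsilon>\<^sup>2) / (L\<^sup>2 * exp (2 * D / lam))) = exp (- (2 * real K * \<epsilon>\<^sup>2 / R\<^sup>2))"
    by (simp add: LR)
  have TV_eq: "TV (pmf (ets_output step small r lam M K I y xT)) (target step r lam y I xT)
      = (1/2) * (\<Sum>x0\<in>UNIV. \<bar>pmf (ets_run step small r lam M K y I xT) x0 - pmf (ref_down (step y) I 0 xT) x0 * W x0 / Evd (step y) W I xT\<bar>)"
    by (simp add: TV_def ets_output_def tgt C_eq)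
  show ?thesis
  proof (cases "R\<^sup>2 \<le> 4 * real K * \<epsilon>\<^sup>2")
    case False
    have "2 * real K * \<epsilon>\<^sup>2 < 1 / 2 * R\<^sup>2" using False by simp
    then have "2 * real K * \<epsilon>\<^sup>2 / R\<^sup>2 < 1 / 2"
      using Rpos by (simp add: pos_divide_less_eq)
    then have "exp (- (2 * real K * \<epsilon>\<^sup>2 / R\<^sup>2)) \<ge> 1 / 2"
      using exp_ge_add_one_self[of "- (2 * real K * \<epsilon>\<^sup>2 / R\<^sup>2)"] by linarith
    then have e1: "1 \<le> 4 * real I * exp (- (2 * real K * \<epsilon>\<^sup>2) / (L\<^sup>2 * exp (2 * D / lam)))"
    proof -
      have "1 * (1 / 2) \<le> real I * exp (- (2 * real K * \<epsilon>\<^sup>2 / R\<^sup>2))"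
        by (rule mult_mono) (use I \<open>exp (- (2 * real K * \<epsilon>\<^sup>2 / R\<^sup>2)) \<ge> 1 / 2\<close> in auto)
      then show ?thesis unfolding ex_eq by simp
    qed
    have "TV (pmf (ets_output step small r lam M K I y xT)) (target step r lam y I xT) \<le> 1"
    proof (rule TV_le_1)
      show "\<And>x. 0 \<le> target step r lam y I xT x" using Cpos by (simp add: tgt Wpos less_imp_le)
      show "(\<Sum>x\<in>UNIV. target step r lam y I xT x) = 1"
        using Cpos by (simp add: tgt sum_divide_distrib[symmetric] C_eq Evd_def)
    qed
    then show ?thesis using e1 first0 unfolding C_def g_def by linarith
  next
    case True
    define ok where "ok = (\<lambda>j xs. \<forall>x0. (pmf (ref_post step y j xs) x0 > 0 \<longrightarrow> pmf (small y j xs) x0 > 0) \<and>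
        pmf (ref_post step y j xs) x0 / pmf (small y j xs) x0 \<le> L)"
    have good: "goodd (step y) ok I xT"
      unfolding goodd_def ok_def using ratio by (simp add: ref_marg_def)
    have stepb: "(\<Sum>x'\<in>UNIV. \<bar>pmf (ets_step step small r lam M K y (Suc i) x) x'
          - pmf (step y (Suc i) x) x' * Evd (step y) W i x' / Evd (step y) W (Suc i) x\<bar>)
          \<le> (\<epsilon> + g) / Evd (step y) W (Suc i) x"
      if H: "\<And>x'. x' \<in> set_pmf (step y (Suc i) x) \<Longrightarrow> ok i x'" for i x
    proof -
      define P where "P = step y (Suc i) x"
      define est where "est = energy_est step small r lam K y i"
      define w where "w = Evd (step y) W i"
      have est_eq: "est c = map_pmf (\<lambda>s. (\<Sum>x0\<leftarrow>s. pmf (ref_post step y i c) x0 / pmf (small y i c) x0 * W x0) / real (length s))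
          (iid_pmf K (small y i c))" for c
        unfolding est_def energy_est_def by (rule map_pmf_cong) (simp_all add: energy_hat_def W_def)
      have w_eq: "w c = (\<Sum>x0\<in>UNIV. pmf (ref_post step y i c) x0 * W x0)" for c
        by (simp add: w_def Evd_def ref_post_def)
      have ets_eq: "ets_step step small r lam M K y (Suc i) x
          = bind_pmf (iid_pmf M (bind_pmf P (\<lambda>c. bind_pmf (est c) (\<lambda>e. return_pmf (c, e)))))
              (\<lambda>ces. bind_pmf (select_index (map snd ces)) (\<lambda>m. return_pmf (fst (ces ! m))))"
        by (simp add: ets_step_def P_def est_def)
      have EEw: "EE P w = Evd (step y) W (Suc i) x"
      proof -
        have "EE P w = (\<Sum>c\<in>UNIV. w c * pmf P c)" by (rule integral_measure_pmf_real) auto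
        then show ?thesis by (simp add: Evd_Suc P_def w_def mult.commute)
      qed
      have Epos: "EE P w > 0" unfolding EEw by (rule Evd_pos[OF Wpos])
      have fin: "finite (set_pmf (est c))" for c unfolding est_eq by (simp add: finite_iid)
      have okc: "\<And>x0. (pmf (ref_post step y i c) x0 > 0 \<longrightarrow> pmf (small y i c) x0 > 0) \<and>
            pmf (ref_post step y i c) x0 / pmf (small y i c) x0 \<le> L" if "c \<in> set_pmf P" for c
        using H[of c] that unfolding ok_def P_def by blast
      have nn: "0 \<le> e" if cP: "c \<in> set_pmf P" and eE: "e \<in> set_pmf (est c)" for c e
      proof -
        obtain s where "e = (\<Sum>x0\<leftarrow>s. pmf (ref_post step y i c) x0 / pmf (small y i c) x0 * W x0) / real (length s)"
          using eE unfolding est_eq by auto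
        moreover have "0 \<le> (\<Sum>x0\<leftarrow>s. pmf (ref_post step y i c) x0 / pmf (small y i c) x0 * W x0)"
          by (rule sum_list_nonneg) (auto simp: Wpos less_imp_le)
        ultimately show ?thesis by simp
      qed
      have mean: "EE (est c) (\<lambda>e. e) = w c" if "c \<in> set_pmf P" for c
        unfolding est_eq w_eq by (rule energy_mean) (use okc[OF that] K in auto)
      have var: "EE (est c) (\<lambda>e. (e - w c)\<^sup>2) \<le> R\<^sup>2 / (4 * real K)" if "c \<in> set_pmf P" for c
        unfolding est_eq w_eq R_def
        by (rule energy_var) (use okc[OF that] K Wb Wpos in \<open>auto intro: less_imp_le\<close>)
      have bnd: "lo \<le> w c \<and> w c \<le> hi" for c
      proof -
        have "(\<Sum>x0\<in>UNIV. pmf (ref_post step y i c) x0 * lo) \<le> w c"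
          unfolding w_eq by (rule sum_mono) (simp add: Wb mult_left_mono)
        moreover have "w c \<le> (\<Sum>x0\<in>UNIV. pmf (ref_post step y i c) x0 * hi)"
          unfolding w_eq by (rule sum_mono) (simp add: Wb mult_left_mono)
        ultimately show ?thesis by (simp add: sum_distrib_right[symmetric] sum_pmf_eq_1)
      qed
      have "(\<Sum>x'\<in>UNIV. \<bar>pmf (ets_step step small r lam M K y (Suc i) x) x' - pmf P x' * w x' / EE P w\<bar>)
          \<le> EE (iid_pmf M (bind_pmf P (\<lambda>c. bind_pmf (est c) (\<lambda>e. return_pmf (c, e)))))
              (\<lambda>ces. \<bar>sum_list (map snd ces) / real M - EE P w\<bar>) / EE P w"
        unfolding ets_eq by (rule select_step[OF fin nn mean Epos M])
      also have "\<dots> \<le> (sqrt (R\<^sup>2 / (4 * real K) / real M) + (hi - lo) / (2 * sqrt (real M))) / EE P w"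
        by (rule divide_right_mono[OF conc[OF fin mean var bnd M]]) (use Epos in auto)
      also have "\<dots> \<le> (\<epsilon> + g) / EE P w"
      proof (rule divide_right_mono)
        show "0 \<le> EE P w" using Epos by simp
        have Mp: "real M \<ge> 1" using M by simp
        have a: "sqrt (R\<^sup>2 / (4 * real K) / real M) \<le> \<epsilon>"
        proof -
          have "R\<^sup>2 / (4 * real K) / real M \<le> R\<^sup>2 / (4 * real K) / 1"
            by (rule divide_left_mono) (use Mp K in auto)
          also have "\<dots> \<le> \<epsilon>\<^sup>2" using True K by (simp add: pos_divide_le_eq mult.commute)
          finally have "sqrt (R\<^sup>2 / (4 * real K) / real M) \<le> sqrt (\<epsilon>\<^sup>2)" by (rule real_sqrt_le_mono)
          then show ?thesis using eps by simp
        qed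
        have b: "(hi - lo) / (2 * sqrt (real M)) \<le> g"
        proof -
          have q: "1 \<le> 4 * real K * \<epsilon>\<^sup>2 / R\<^sup>2" using True Rpos by (simp add: pos_le_divide_eq)
          have "1 / real M * 1 \<le> 1 / real M * (4 * real K * \<epsilon>\<^sup>2 / R\<^sup>2)"
            by (rule mult_left_mono[OF q]) simp
          then have "1 / real M \<le> 4 * real K * \<epsilon>\<^sup>2 / (real M * R\<^sup>2)" by simp
          then have "sqrt (1 / real M) \<le> sqrt (4 * real K * \<epsilon>\<^sup>2 / (real M * R\<^sup>2))"
            by (rule real_sqrt_le_mono)
          then have "(hi - lo) / 2 * sqrt (1 / real M) \<le> g"
            unfolding g_eq using hilo by (simp add: mult_left_mono)
          then show ?thesis by (simp add: real_sqrt_divide)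
        qed
        show "sqrt (R\<^sup>2 / (4 * real K) / real M) + (hi - lo) / (2 * sqrt (real M)) \<le> \<epsilon> + g"
          using a b by linarith
      qed
      finally have X: "(\<Sum>x'\<in>UNIV. \<bar>pmf (ets_step step small r lam M K y (Suc i) x) x' - pmf P x' * w x' / EE P w\<bar>)
          \<le> (\<epsilon> + g) / EE P w" .
      show ?thesis using X unfolding EEw by (simp only: P_def w_def)
    qed
    have ch: "Evd (step y) W I xT * (\<Sum>x0\<in>UNIV. \<bar>pmf (ets_run step small r lam M K y I xT) x0
          - pmf (ref_down (step y) I 0 xT) x0 * W x0 / Evd (step y) W I xT\<bar>) \<le> real I * (\<epsilon> + g)"
      by (rule chain[where Qs = "ets_step step small r lam M K y" and ok = ok, OF Wpos _ _ stepb good]) simp_all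
    have "TV (pmf (ets_output step small r lam M K I y xT)) (target step r lam y I xT)
        \<le> real I * (\<epsilon> + g) / (2 * C)"
    proof -
      let ?S = "(\<Sum>x0\<in>UNIV. \<bar>pmf (ets_run step small r lam M K y I xT) x0
          - pmf (ref_down (step y) I 0 xT) x0 * W x0 / Evd (step y) W I xT\<bar>)"
      have "?S \<le> real I * (\<epsilon> + g) / C" using ch Cpos unfolding C_eq[symmetric] by (simp add: pos_le_divide_eq mult.commute)
      then show ?thesis unfolding TV_eq by simp
    qed
    also have "\<dots> \<le> real I * ((2 * \<epsilon> + g) / (C - \<epsilon> - g))"
    proof -
      have "(\<epsilon> + g) / (2 * C) \<le> (2 * \<epsilon> + g) / (C - \<epsilon> - g)"
        by (rule frac_le) (use eps g0 den Cpos in auto)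
      then have "real I * ((\<epsilon> + g) / (2 * C)) \<le> real I * ((2 * \<epsilon> + g) / (C - \<epsilon> - g))"
        by (rule mult_left_mono) simp
      then show ?thesis by (simp only: times_divide_eq_right)
    qed
    finally have "TV (pmf (ets_output step small r lam M K I y xT)) (target step r lam y I xT)
        \<le> real I * ((2 * \<epsilon> + g) / (C - \<epsilon> - g))" .
    moreover have "0 \<le> 4 * real I * exp (- (2 * real K * \<epsilon>\<^sup>2) / (L\<^sup>2 * exp (2 * D / lam)))" by simp
    ultimately show ?thesis unfolding C_def g_def by linarith
  qed
qed

end
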